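(* Let $n=3$ and $r=2$. Let $\theta=(\theta_1,\theta_2,\theta_3)\in\mathbb{R}^3$ and let $T_1,T_2,T_3$ be independent random variables with $T_i\sim N(\theta_i,1)$. Let $\Phi$ be the standard normal cumulative distribution function, and set $p_i=1-\Phi(T_i)$, $q_i=\Phi(T_i)$. With $p_{(1)}\le p_{(2)}\le p_{(3)}$ and $q_{(1)}\le q_{(2)}\le q_{(3)}$ the order statistics, define $p^+_{2/3}=2\,p_{(2)}$ and $p^-_{2/3}=2\,q_{(2)}$. Let $n^+=|\{i:\theta_i>0\}|$, $n^-=|\{i:\theta_i<0\}|$ and let $H_{2/3}$ be the hypothesis $n^+<2$ and $n^-<2$. Then $p_{2/3}=\min\{p^+_{2/3},p^-_{2/3}\}$ is a valid $p$-value for $H_{2/3}$: for every $\alpha\in(0,1/2)$ and every $\theta$ satisfying $H_{2/3}$, $\Pr_\theta(p_{2/3}\le\alpha)\le\alpha$.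
   Context: $p^+_{2/3}$ and $p^-_{2/3}$ are the Bonferroni partial conjunction $p$-values $(n-r+1)p_{(r)}$ and $(n-r+1)q_{(r)}$ with $n=3$, $r=2$. $H_{2/3}$ is the "2 out of 3 directional replicability" null hypothesis. *)

theory Defs
  imports "HOL-Probability.Probability"
begin

definition Phi :: "real \<Rightarrow> real" where
  "Phi x = measure (density lborel std_normal_density) {..x}"

definition order_stat :: "nat \<Rightarrow> nat \<Rightarrow> (nat \<Rightarrow> real) \<Rightarrow> real" where
  "order_stat n r f = sort (map f [0..<n]) ! (r - 1)"

text \<open>Bonferroni partial conjunction p-values for n = 3, r = 2.\<close>
definition p_plus_23 :: "(nat \<Rightarrow> real) \<Rightarrow> real" where
  "p_plus_23 t = (3 - 2 + 1) * order_stat 3 2 (\<lambda>i. 1 - Phi (t i))"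

definition p_minus_23 :: "(nat \<Rightarrow> real) \<Rightarrow> real" where
  "p_minus_23 t = (3 - 2 + 1) * order_stat 3 2 (\<lambda>i. Phi (t i))"

definition p_23 :: "(nat \<Rightarrow> real) \<Rightarrow> real" where
  "p_23 t = min (p_plus_23 t) (p_minus_23 t)"

definition H_23 :: "(nat \<Rightarrow> real) \<Rightarrow> bool" where
  "H_23 \<theta> \<longleftrightarrow> card {i \<in> {0..<3::nat}. \<theta> i > 0} < 2 \<and> card {i \<in> {0..<3::nat}. \<theta> i < 0} < 2"

end

theory Submission
  imports Defs
begin

definition Nd :: "real \<Rightarrow> real measure" where
  "Nd t = density lborel (normal_density t 1)"

lemma Nd_real_distribution: "real_distribution (Nd t)"
  unfolding Nd_def real_distribution_def real_distribution_axioms_def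
  using prob_space_normal_density by auto

lemma Nd_space[simp]: "space (Nd t) = UNIV" and Nd_sets[simp]: "sets (Nd t) = sets borel"
  by (auto simp: Nd_def)

lemma Nd_singleton: "measure (Nd t) {x} = 0"
proof -
  have "emeasure (Nd t) {x} = 0"
    unfolding Nd_def by (subst emeasure_density) (auto intro!: nn_integral_null_set)
  then show ?thesis by (simp add: measure_def)
qed

lemma Nd_fbm: "finite_borel_measure (Nd t)"
  using real_distribution.finite_borel_measure_M[OF Nd_real_distribution] .

lemma Phi_cdf: "Phi = cdf (Nd 0)"
  by (simp add: Phi_def cdf_def fun_eq_iff Nd_def)

lemma Phi_cont: "isCont Phi x"
  unfolding Phi_cdf using finite_borel_measure.isCont_cdf[OF Nd_fbm] Nd_singleton by auto

lemma Phi_mono: "x \<le> y \<Longrightarrow> Phi x \<le> Phi y"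
  unfolding Phi_cdf using finite_borel_measure.cdf_nondecreasing[OF Nd_fbm] by auto

lemma Phi_top: "(Phi \<longlongrightarrow> 1) at_top"
  unfolding Phi_cdf using real_distribution.cdf_lim_at_top_prob[OF Nd_real_distribution] by auto

lemma Phi_bot: "(Phi \<longlongrightarrow> 0) at_bot"
  unfolding Phi_cdf using finite_borel_measure.cdf_lim_at_bot[OF Nd_fbm] by auto

lemma Phi_cont_on: "continuous_on UNIV Phi"
  using Phi_cont continuous_at_imp_continuous_on by blast

lemma As_interval:
  assumes "0 < c" "c < 1"
  shows "\<exists>z. {x. 1 - Phi x \<le> c} = {z..}"
proof -
  let ?S = "{x. 1 - c \<le> Phi x}"
  have cl: "closed ?S"
    by (intro closed_Collect_le continuous_on_const Phi_cont_on)
  have "\<forall>\<^sub>F x in at_top. Phi x > 1 - c"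
    using order_tendstoD(1)[OF Phi_top] assms by auto
  then obtain x0 where "Phi x0 > 1 - c" using eventually_at_top_linorder by (metis order.refl)
  then have ne: "?S \<noteq> {}" by (metis (mono_tags, lifting) empty_iff less_imp_le mem_Collect_eq)
  have "\<forall>\<^sub>F x in at_bot. Phi x < 1 - c"
    using order_tendstoD(2)[OF Phi_bot] assms by auto
  then obtain y where y: "Phi y < 1 - c" using eventually_at_bot_linorder by (metis order.refl)
  have bdd: "bdd_below ?S"
  proof (rule bdd_belowI[of _ y])
    fix x assume "x \<in> ?S"
    then show "y \<le> x" using y Phi_mono[of x y] by (cases "x \<le> y") auto
  qed
  have zS: "Inf ?S \<in> ?S" by (rule closed_contains_Inf[OF ne bdd cl])
  have "?S = {Inf ?S..}"
  proof
    show "?S \<subseteq> {Inf ?S..}" using cInf_lower[OF _ bdd] by auto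
    show "{Inf ?S..} \<subseteq> ?S" using zS Phi_mono by fastforce
  qed
  moreover have "{x. 1 - Phi x \<le> c} = ?S" by auto
  ultimately show ?thesis by auto
qed

lemma Bs_interval:
  assumes "0 < c" "c < 1"
  shows "\<exists>w. {x. Phi x \<le> c} = {..w}"
proof -
  let ?S = "{x. Phi x \<le> c}"
  have cl: "closed ?S"
    by (intro closed_Collect_le continuous_on_const Phi_cont_on)
  have "\<forall>\<^sub>F x in at_bot. Phi x < c"
    using order_tendstoD(2)[OF Phi_bot] assms by auto
  then obtain x0 where "Phi x0 < c" using eventually_at_bot_linorder by (metis order.refl)
  then have ne: "?S \<noteq> {}" by (metis (mono_tags, lifting) empty_iff less_imp_le mem_Collect_eq)
  have "\<forall>\<^sub>F x in at_top. Phi x > c"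
    using order_tendstoD(1)[OF Phi_top] assms by auto
  then obtain y where y: "Phi y > c" using eventually_at_top_linorder by (metis order.refl)
  have bdd: "bdd_above ?S"
  proof (rule bdd_aboveI[of _ y])
    fix x assume "x \<in> ?S"
    then show "x \<le> y" using y Phi_mono[of y x] by (cases "y \<le> x") auto
  qed
  have zS: "Sup ?S \<in> ?S" by (rule closed_contains_Sup[OF ne bdd cl])
  have "?S = {..Sup ?S}"
  proof
    show "?S \<subseteq> {..Sup ?S}" using cSup_upper[OF _ bdd] by auto
    show "{..Sup ?S} \<subseteq> ?S" using zS Phi_mono by fastforce
  qed
  then show ?thesis by auto
qed

lemma nd_factor: "normal_density t 1 x = normal_density 0 1 x * exp (t * x - t\<^sup>2 / 2)"
proof -
  have "- (x - t)\<^sup>2 / 2 = - x\<^sup>2 / 2 + (t * x - t\<^sup>2 / 2)" by (simp add: power2_eq_square field_simps)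
  then show ?thesis by (simp add: normal_density_def exp_add[symmetric] del: exp_add)
qed

lemma Nd_emeasure: "S \<in> sets borel \<Longrightarrow> emeasure (Nd t) S = (\<integral>\<^sup>+x. ennreal (normal_density t 1 x) * indicator S x \<partial>lborel)"
  unfolding Nd_def by (subst emeasure_density) auto

lemma Nd_finite: "emeasure (Nd t) S \<noteq> \<top>"
  using Nd_fbm finite_borel_measure.axioms(1) finite_measure.emeasure_finite by blast

lemma cmp_le:
  assumes S: "S \<in> sets borel" and K: "0 \<le> K" and b: "\<And>x. x \<in> S \<Longrightarrow> exp (t * x - t\<^sup>2 / 2) \<le> K"
  shows "measure (Nd t) S \<le> K * measure (Nd 0) S"
proof -
  have "emeasure (Nd t) S \<le> (\<integral>\<^sup>+x. ennreal K * (ennreal (normal_density 0 1 x) * indicator S x) \<partial>lborel)"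
    unfolding Nd_emeasure[OF S]
  proof (intro nn_integral_mono)
    fix x
    show "ennreal (normal_density t 1 x) * indicator S x \<le> ennreal K * (ennreal (normal_density 0 1 x) * indicator S x)"
    proof (cases "x \<in> S")
      case True
      have "normal_density t 1 x \<le> K * normal_density 0 1 x"
        unfolding nd_factor[of t] using b[OF True] by (metis mult.commute mult_left_mono normal_density_nonneg)
      then show ?thesis using True K by (simp add: ennreal_mult'[symmetric] ennreal_leI)
    qed simp
  qed
  also have "\<dots> = ennreal K * emeasure (Nd 0) S"
    using S by (subst nn_integral_cmult) (auto simp: Nd_emeasure[OF S])
  finally have "emeasure (Nd t) S \<le> ennreal K * emeasure (Nd 0) S" .
  then have "enn2real (emeasure (Nd t) S) \<le> enn2real (ennreal K * emeasure (Nd 0) S)"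
    using Nd_finite[of 0 S] by (intro enn2real_mono) (simp_all add: less_top[symmetric] ennreal_mult_eq_top_iff)
  then show ?thesis by (simp add: measure_def enn2real_mult K)
qed

lemma cmp_ge:
  assumes S: "S \<in> sets borel" and K: "0 \<le> K" and b: "\<And>x. x \<in> S \<Longrightarrow> K \<le> exp (t * x - t\<^sup>2 / 2)"
  shows "K * measure (Nd 0) S \<le> measure (Nd t) S"
proof -
  have "(\<integral>\<^sup>+x. ennreal K * (ennreal (normal_density 0 1 x) * indicator S x) \<partial>lborel) \<le> emeasure (Nd t) S"
    unfolding Nd_emeasure[OF S]
  proof (intro nn_integral_mono)
    fix x
    show "ennreal K * (ennreal (normal_density 0 1 x) * indicator S x) \<le> ennreal (normal_density t 1 x) * indicator S x"
    proof (cases "x \<in> S")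
      case True
      have "K * normal_density 0 1 x \<le> normal_density t 1 x"
        unfolding nd_factor[of t] using b[OF True] by (metis mult.commute mult_left_mono normal_density_nonneg)
      then show ?thesis using True K by (simp add: ennreal_mult'[symmetric] ennreal_leI)
    qed simp
  qed
  also have "(\<integral>\<^sup>+x. ennreal K * (ennreal (normal_density 0 1 x) * indicator S x) \<partial>lborel) = ennreal K * emeasure (Nd 0) S"
    using S by (subst nn_integral_cmult) (auto simp: Nd_emeasure[OF S])
  finally have "ennreal K * emeasure (Nd 0) S \<le> emeasure (Nd t) S" .
  then have "enn2real (ennreal K * emeasure (Nd 0) S) \<le> enn2real (emeasure (Nd t) S)"
    using Nd_finite[of t S] by (intro enn2real_mono) (simp_all add: less_top[symmetric])
  then show ?thesis by (simp add: measure_def enn2real_mult K)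
qed

definition As :: "real \<Rightarrow> real set" where "As c = {x. 1 - Phi x \<le> c}"
definition Bs :: "real \<Rightarrow> real set" where "Bs c = {x. Phi x \<le> c}"
definition Rs :: "real \<Rightarrow> real set" where "Rs c = - (As c \<union> Bs c)"

lemma Nd_prob: "prob_space (Nd t)"
  using Nd_real_distribution real_distribution.axioms(1) by blast

lemma coord:
  assumes c0: "0 < c" and c1: "c < 1/2"
  shows "As c \<in> sets borel" "Bs c \<in> sets borel" "Rs c \<in> sets borel"
    "measure (Nd t) (As c) + measure (Nd t) (Bs c) + measure (Nd t) (Rs c) = 1"
    "t \<le> 0 \<Longrightarrow> (1 - 2*c) * measure (Nd t) (As c) \<le> c * measure (Nd t) (Rs c)"
    "0 \<le> t \<Longrightarrow> (1 - 2*c) * measure (Nd t) (Bs c) \<le> c * measure (Nd t) (Rs c)"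
    "measure (Nd 0) (As c) \<le> c" "measure (Nd 0) (Bs c) \<le> c"
proof -
  obtain z where z: "As c = {z..}" using As_interval[of c] c0 c1 unfolding As_def by auto
  obtain w where w: "Bs c = {..w}" using Bs_interval[of c] c0 c1 unfolding Bs_def by auto
  have disj: "As c \<inter> Bs c = {}" using c1 unfolding As_def Bs_def by auto
  have wz: "w < z"
  proof (rule ccontr)
    assume "\<not> w < z" then have "z \<in> As c \<inter> Bs c" using z w by auto
    then show False using disj by auto
  qed
  have R: "Rs c = {w<..<z}" unfolding Rs_def z w using wz by auto
  show mA: "As c \<in> sets borel" and mB: "Bs c \<in> sets borel" and mR: "Rs c \<in> sets borel"
    unfolding z w R by auto
  have sum1: "measure (Nd s) (As c) + measure (Nd s) (Bs c) + measure (Nd s) (Rs c) = 1" for s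
  proof -
    interpret P: prob_space "Nd s" by (rule Nd_prob)
    have "measure (Nd s) (As c \<union> Bs c) = measure (Nd s) (As c) + measure (Nd s) (Bs c)"
      using mA mB disj by (intro P.finite_measure_Union) auto
    moreover have "measure (Nd s) (Rs c) = 1 - measure (Nd s) (As c \<union> Bs c)"
      using P.prob_compl[of "As c \<union> Bs c"] mA mB by (simp add: Rs_def Compl_eq_Diff_UNIV)
    ultimately show ?thesis by simp
  qed
  show "measure (Nd t) (As c) + measure (Nd t) (Bs c) + measure (Nd t) (Rs c) = 1" by (rule sum1)
  interpret P0: prob_space "Nd 0" by (rule Nd_prob)
  have zA: "1 - Phi z \<le> c" using z unfolding As_def by auto
  have wB: "Phi w \<le> c" using w unfolding Bs_def by auto
  have "measure (Nd 0) {..z} = measure (Nd 0) {..<z} + measure (Nd 0) {z}"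
  proof -
    have "{..z} = {..<z} \<union> {z}" by auto
    moreover have "measure (Nd 0) ({..<z} \<union> {z}) = measure (Nd 0) {..<z} + measure (Nd 0) {z}"
      by (rule P0.finite_measure_Union) auto
    ultimately show ?thesis by simp
  qed
  then have "measure (Nd 0) {..<z} = Phi z" using Nd_singleton[of 0 z] by (simp add: Phi_def Nd_def)
  moreover have "measure (Nd 0) {z..} = 1 - measure (Nd 0) {..<z}"
  proof -
    have "{z..} = UNIV - {..<z}" by auto
    then show ?thesis using P0.prob_compl[of "{..<z}"] by simp
  qed
  ultimately have a0: "measure (Nd 0) (As c) \<le> c" using zA z by simp
  show "measure (Nd 0) (As c) \<le> c" by (rule a0)
  have b0: "measure (Nd 0) (Bs c) \<le> c" using wB w by (simp add: Phi_def Nd_def)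
  show "measure (Nd 0) (Bs c) \<le> c" by (rule b0)
  have r0: "1 - 2*c \<le> measure (Nd 0) (Rs c)" using sum1[of 0] a0 b0 by linarith
  have a0n: "0 \<le> measure (Nd 0) (As c)" by simp
  have b0n: "0 \<le> measure (Nd 0) (Bs c)" by simp
  show "(1 - 2*c) * measure (Nd t) (As c) \<le> c * measure (Nd t) (Rs c)" if t: "t \<le> 0"
  proof -
    define K where "K = exp (t * z - t\<^sup>2 / 2)"
    have K0: "0 \<le> K" unfolding K_def by simp
    have "measure (Nd t) (As c) \<le> K * measure (Nd 0) (As c)"
    proof (rule cmp_le[OF mA K0])
      fix x assume "x \<in> As c"
      then have "z \<le> x" using z by auto
      then have "t * x \<le> t * z" using t by (simp add: mult_left_mono_neg)
      then show "exp (t * x - t\<^sup>2 / 2) \<le> K" unfolding K_def by simp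
    qed
    also have "\<dots> \<le> K * c" using a0 K0 by (simp add: mult_left_mono)
    finally have aK: "measure (Nd t) (As c) \<le> K * c" .
    have "K * measure (Nd 0) (Rs c) \<le> measure (Nd t) (Rs c)"
    proof (rule cmp_ge[OF mR K0])
      fix x assume "x \<in> Rs c"
      then have "x \<le> z" using R by auto
      then have "t * z \<le> t * x" using t by (simp add: mult_left_mono_neg)
      then show "K \<le> exp (t * x - t\<^sup>2 / 2)" unfolding K_def by simp
    qed
    moreover have "K * (1 - 2*c) \<le> K * measure (Nd 0) (Rs c)" using r0 K0 by (simp add: mult_left_mono)
    ultimately have rK: "K * (1 - 2*c) \<le> measure (Nd t) (Rs c)" by linarith
    have "(1 - 2*c) * measure (Nd t) (As c) \<le> (1 - 2*c) * (K * c)"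
      using aK c1 by (intro mult_left_mono) auto
    also have "\<dots> = c * (K * (1 - 2*c))" by (simp add: algebra_simps)
    also have "\<dots> \<le> c * measure (Nd t) (Rs c)" using rK c0 by (intro mult_left_mono) auto
    finally show ?thesis .
  qed
  show "(1 - 2*c) * measure (Nd t) (Bs c) \<le> c * measure (Nd t) (Rs c)" if t: "0 \<le> t"
  proof -
    define K where "K = exp (t * w - t\<^sup>2 / 2)"
    have K0: "0 \<le> K" unfolding K_def by simp
    have "measure (Nd t) (Bs c) \<le> K * measure (Nd 0) (Bs c)"
    proof (rule cmp_le[OF mB K0])
      fix x assume "x \<in> Bs c"
      then have "x \<le> w" using w by auto
      then have "t * x \<le> t * w" using t by (simp add: mult_left_mono)
      then show "exp (t * x - t\<^sup>2 / 2) \<le> K" unfolding K_def by simp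
    qed
    also have "\<dots> \<le> K * c" using b0 K0 by (simp add: mult_left_mono)
    finally have aK: "measure (Nd t) (Bs c) \<le> K * c" .
    have "K * measure (Nd 0) (Rs c) \<le> measure (Nd t) (Rs c)"
    proof (rule cmp_ge[OF mR K0])
      fix x assume "x \<in> Rs c"
      then have "w \<le> x" using R by auto
      then have "t * w \<le> t * x" using t by (simp add: mult_left_mono)
      then show "K \<le> exp (t * x - t\<^sup>2 / 2)" unfolding K_def by simp
    qed
    moreover have "K * (1 - 2*c) \<le> K * measure (Nd 0) (Rs c)" using r0 K0 by (simp add: mult_left_mono)
    ultimately have rK: "K * (1 - 2*c) \<le> measure (Nd t) (Rs c)" by linarith
    have "(1 - 2*c) * measure (Nd t) (Bs c) \<le> (1 - 2*c) * (K * c)"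
      using aK c1 by (intro mult_left_mono) auto
    also have "\<dots> = c * (K * (1 - 2*c))" by (simp add: algebra_simps)
    also have "\<dots> \<le> c * measure (Nd t) (Rs c)" using rK c0 by (intro mult_left_mono) auto
    finally show ?thesis .
  qed
qed

definition G :: "real \<Rightarrow> real \<Rightarrow> real \<Rightarrow> real" where
  "G x y z = x*y + x*z + y*z - 2*x*y*z"

lemma G_step:
  assumes "0 \<le> x" "x \<le> 1" "0 \<le> y" "y \<le> 1" "0 \<le> z" "z \<le> c"
  shows "G x y z \<le> c * (x + y) + (1 - 2*c) * (x*y)"
proof -
  have e: "G x y z = z * (x*(1-y) + y*(1-x)) + x*y" unfolding G_def by (simp add: algebra_simps)
  have "0 \<le> x*(1-y) + y*(1-x)" using assms by simp
  then have "z * (x*(1-y) + y*(1-x)) \<le> c * (x*(1-y) + y*(1-x))" using assms by (intro mult_right_mono) auto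
  then show ?thesis unfolding e by (simp add: algebra_simps)
qed

lemma alg:
  assumes nn: "0 \<le> aj" "0 \<le> am" "0 \<le> ak" "0 \<le> bj" "0 \<le> bm" "0 \<le> bk" "0 \<le> rj" "0 \<le> rm"
    and s: "aj + bj + rj = 1" "am + bm + rm = 1"
    and k: "ak \<le> c" "bk \<le> c"
    and j: "(1 - 2*c) * bj \<le> c * rj" and m: "(1 - 2*c) * am \<le> c * rm"
    and c: "0 \<le> c" "c \<le> 1/2"
  shows "G aj am ak + G bj bm bk \<le> 2 * c"
proof -
  have 1: "G aj am ak \<le> c * (aj + am) + (1 - 2*c) * (aj*am)"
    using nn s k by (intro G_step) auto
  have 2: "G bj bm bk \<le> c * (bj + bm) + (1 - 2*c) * (bm*bj)"
    using nn s k G_step[of bj bm bk c] by (auto simp: mult.commute)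
  have 3: "(1 - 2*c) * (aj*am) \<le> c * rm"
  proof -
    have "(1 - 2*c) * (aj*am) = aj * ((1-2*c)*am)" by simp
    also have "\<dots> \<le> 1 * (c * rm)"
    proof -
      have h1: "aj \<le> 1" using nn s by linarith
      have h2: "0 \<le> (1-2*c)*am" using nn c by simp
      show ?thesis by (rule mult_mono[OF h1 m zero_le_one h2])
    qed
    finally show ?thesis by simp
  qed
  have 4: "(1 - 2*c) * (bm*bj) \<le> c * rj"
  proof -
    have "(1 - 2*c) * (bm*bj) = bm * ((1-2*c)*bj)" by simp
    also have "\<dots> \<le> 1 * (c * rj)"
    proof -
      have h1: "bm \<le> 1" using nn s by linarith
      have h2: "0 \<le> (1-2*c)*bj" using nn c by simp
      show ?thesis by (rule mult_mono[OF h1 j zero_le_one h2])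
    qed
    finally show ?thesis by simp
  qed
  have "c * (aj + am) + c * (bj + bm) + c * rm + c * rj = c * ((aj + bj + rj) + (am + bm + rm))"
    by (simp add: algebra_simps)
  then show ?thesis using 1 2 3 4 s by simp
qed

lemma G_perm:
  assumes "j < 3" "m < 3" "k < (3::nat)" "j \<noteq> m" "j \<noteq> k" "m \<noteq> k"
  shows "G (f j) (f m) (f k) = G (f 0) (f 1) (f 2)"
proof -
  have "j = 0 \<or> j = 1 \<or> j = 2" "m = 0 \<or> m = 1 \<or> m = 2" "k = 0 \<or> k = 1 \<or> k = 2" using assms by auto
  then show ?thesis using assms unfolding G_def by (elim disjE) (simp_all add: algebra_simps)
qed

lemma med3:
  fixes x0 x1 x2 u :: real
  assumes "sort [x0, x1, x2] ! 1 \<le> u"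
  shows "(x0 \<le> u \<and> x1 \<le> u) \<or> (x0 \<le> u \<and> x2 \<le> u) \<or> (x1 \<le> u \<and> x2 \<le> u)"
  using assms by (auto split: if_splits)

lemma order_stat_3: "order_stat 3 2 f = sort [f 0, f 1, f 2] ! 1"
  by (simp add: order_stat_def eval_nat_numeral upt_rec)

lemma signs:
  fixes x0 x1 x2 :: real
  assumes "\<not> (x0 > 0 \<and> x1 > 0)" "\<not> (x0 > 0 \<and> x2 > 0)" "\<not> (x1 > 0 \<and> x2 > 0)"
    "\<not> (x0 < 0 \<and> x1 < 0)" "\<not> (x0 < 0 \<and> x2 < 0)" "\<not> (x1 < 0 \<and> x2 < 0)"
  shows "(0\<le>x0 \<and> x1\<le>0 \<and> x2=0) \<or> (0\<le>x0 \<and> x2\<le>0 \<and> x1=0) \<or> (0\<le>x1 \<and> x0\<le>0 \<and> x2=0) \<or>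
         (0\<le>x1 \<and> x2 \<le>0 \<and> x0=0) \<or> (0\<le>x2 \<and> x0\<le>0 \<and> x1=0) \<or> (0\<le>x2 \<and> x1\<le>0 \<and> x0=0)"
  using assms by linarith

lemma H_perm:
  assumes "H_23 \<theta>"
  shows "\<exists>j m k. j < 3 \<and> m < 3 \<and> k < (3::nat) \<and> j \<noteq> m \<and> j \<noteq> k \<and> m \<noteq> k \<and> 0 \<le> \<theta> j \<and> \<theta> m \<le> 0 \<and> \<theta> k = 0"
proof -
  have np: "\<not> (\<theta> a > 0 \<and> \<theta> b > 0)" if "a < 3" "b < 3" "a \<noteq> b" for a b
  proof
    assume h: "\<theta> a > 0 \<and> \<theta> b > 0"
    have "{a, b} \<subseteq> {i \<in> {0..<3::nat}. \<theta> i > 0}" using h that by auto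
    then have "card {a, b} \<le> card {i \<in> {0..<3::nat}. \<theta> i > 0}" by (intro card_mono) auto
    then show False using assms that unfolding H_23_def by auto
  qed
  have nn: "\<not> (\<theta> a < 0 \<and> \<theta> b < 0)" if "a < 3" "b < 3" "a \<noteq> b" for a b
  proof
    assume h: "\<theta> a < 0 \<and> \<theta> b < 0"
    have "{a, b} \<subseteq> {i \<in> {0..<3::nat}. \<theta> i < 0}" using h that by auto
    then have "card {a, b} \<le> card {i \<in> {0..<3::nat}. \<theta> i < 0}" by (intro card_mono) auto
    then show False using assms that unfolding H_23_def by auto
  qed
  have "(0\<le>\<theta> 0 \<and> \<theta> 1\<le>0 \<and> \<theta> 2=0) \<or> (0\<le>\<theta> 0 \<and> \<theta> 2\<le>0 \<and> \<theta> 1=0) \<or> (0\<le>\<theta> 1 \<and> \<theta> 0\<le>0 \<and> \<theta> 2=0) \<or>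
         (0\<le>\<theta> 1 \<and> \<theta> 2 \<le>0 \<and> \<theta> 0=0) \<or> (0\<le>\<theta> 2 \<and> \<theta> 0\<le>0 \<and> \<theta> 1=0) \<or> (0\<le>\<theta> 2 \<and> \<theta> 1\<le>0 \<and> \<theta> 0=0)"
    by (rule signs) (use np[of 0 1] np[of 0 2] np[of 1 2] nn[of 0 1] nn[of 0 2] nn[of 1 2] in auto)
  then show ?thesis
    apply (elim disjE)
    subgoal by (rule exI[of _ 0], rule exI[of _ 1], rule exI[of _ 2]) auto
    subgoal by (rule exI[of _ 0], rule exI[of _ 2], rule exI[of _ 1]) auto
    subgoal by (rule exI[of _ 1], rule exI[of _ 0], rule exI[of _ 2]) auto
    subgoal by (rule exI[of _ 1], rule exI[of _ 2], rule exI[of _ 0]) auto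
    subgoal by (rule exI[of _ 2], rule exI[of _ 0], rule exI[of _ 1]) auto
    subgoal by (rule exI[of _ 2], rule exI[of _ 1], rule exI[of _ 0]) auto
    done
qed

theorem proposition1:
  fixes M :: "'a measure" and T :: "nat \<Rightarrow> 'a \<Rightarrow> real"
    and \<theta> :: "nat \<Rightarrow> real" and \<alpha> :: real
  assumes "prob_space M"
    and "prob_space.indep_vars M (\<lambda>_. borel) T {0..<3}"
    and "\<And>i. i < 3 \<Longrightarrow> distributed M lborel (T i) (normal_density (\<theta> i) 1)"
    and "0 < \<alpha>" and "\<alpha> < 1/2"
    and "H_23 \<theta>"
  shows "measure M {\<omega> \<in> space M. p_23 (\<lambda>i. T i \<omega>) \<le> \<alpha>} \<le> \<alpha>"
proof -
  interpret prob_space M by (rule assms(1))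
  define c where "c = \<alpha> / 2"
  have c0: "0 < c" and c1: "c < 1/2" using assms(4,5) unfolding c_def by auto
  note cd = coord[OF c0 c1]
  have ind: "indep_sets (\<lambda>i. {T i -` A \<inter> space M | A. A \<in> sets borel}) {0..<3}"
    using assms(2) unfolding indep_vars_def2 by auto
  have meas: "T i \<in> measurable M lborel" if "i < 3" for i
    using distributed_measurable[OF assms(3)[OF that]] .
  have pe: "prob (T i -` S \<inter> space M) = measure (Nd (\<theta> i)) S" if "i < 3" "S \<in> sets borel" for i S
  proof -
    have "prob (T i -` S \<inter> space M) = measure (distr M lborel (T i)) S"
      using measure_distr[OF meas[OF that(1)], of S] that(2) by simp
    also have "\<dots> = measure (Nd (\<theta> i)) S"
      unfolding distributed_distr_eq_density[OF assms(3)[OF that(1)]] Nd_def ..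
    finally show ?thesis .
  qed
  have ev: "T i -` S \<inter> space M \<in> events" if "i < 3" "S \<in> sets borel" for i S
    using meas[OF that(1)] that(2) by (auto simp: measurable_def)
  define EA where "EA i = T i -` As c \<inter> space M" for i
  define EB where "EB i = T i -` Bs c \<inter> space M" for i
  define a where "a i = measure (Nd (\<theta> i)) (As c)" for i
  define b where "b i = measure (Nd (\<theta> i)) (Bs c)" for i
  define r where "r i = measure (Nd (\<theta> i)) (Rs c)" for i
  have pair: "prob ((T i -` S \<inter> space M) \<inter> (T j -` S \<inter> space M)) = measure (Nd (\<theta> i)) S * measure (Nd (\<theta> j)) S"
    if "i < 3" "j < 3" "i \<noteq> j" "S \<in> sets borel" for i j S
  proof -
    have "prob (\<Inter>l\<in>{i,j}. T l -` S \<inter> space M) = (\<Prod>l\<in>{i,j}. prob (T l -` S \<inter> space M))"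
      using that by (intro indep_setsD[OF ind]) auto
    then show ?thesis using that pe by simp
  qed
  have triple: "prob ((T 0 -` S \<inter> space M) \<inter> (T 1 -` S \<inter> space M) \<inter> (T 2 -` S \<inter> space M)) =
      measure (Nd (\<theta> 0)) S * measure (Nd (\<theta> 1)) S * measure (Nd (\<theta> 2)) S"
    if "S \<in> sets borel" for S
  proof -
    have "prob (\<Inter>l\<in>{0,1,2}. T l -` S \<inter> space M) = (\<Prod>l\<in>{0,1,2}. prob (T l -` S \<inter> space M))"
      using that by (intro indep_setsD[OF ind]) auto
    then show ?thesis using that pe by (simp add: Int_assoc mult.assoc)
  qed
  have twoof: "prob (((T 0 -` S \<inter> space M) \<inter> (T 1 -` S \<inter> space M)) \<union> ((T 0 -` S \<inter> space M) \<inter> (T 2 -` S \<inter> space M))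
         \<union> ((T 1 -` S \<inter> space M) \<inter> (T 2 -` S \<inter> space M)))
      = G (measure (Nd (\<theta> 0)) S) (measure (Nd (\<theta> 1)) S) (measure (Nd (\<theta> 2)) S)"
    if S: "S \<in> sets borel" for S
  proof -
    define E0 where "E0 = T 0 -` S \<inter> space M"
    define E1 where "E1 = T 1 -` S \<inter> space M"
    define E2 where "E2 = T 2 -` S \<inter> space M"
    have e: "E0 \<in> events" "E1 \<in> events" "E2 \<in> events" unfolding E0_def E1_def E2_def using ev S by auto
    then have f: "E0 \<inter> E1 \<in> fmeasurable M" "E0 \<inter> E2 \<in> fmeasurable M" "E1 \<inter> E2 \<in> fmeasurable M"
      "(E0 \<inter> E1) \<union> (E0 \<inter> E2) \<in> fmeasurable M"
      by (auto simp: fmeasurable_eq_sets)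
    have "prob ((E0 \<inter> E1) \<union> (E0 \<inter> E2) \<union> (E1 \<inter> E2)) =
        prob ((E0 \<inter> E1) \<union> (E0 \<inter> E2)) + prob (E1 \<inter> E2) - prob (((E0 \<inter> E1) \<union> (E0 \<inter> E2)) \<inter> (E1 \<inter> E2))"
      using f(4,3) by (rule measure_Un3)
    also have "prob ((E0 \<inter> E1) \<union> (E0 \<inter> E2)) = prob (E0 \<inter> E1) + prob (E0 \<inter> E2) - prob ((E0 \<inter> E1) \<inter> (E0 \<inter> E2))"
      using f(1,2) by (rule measure_Un3)
    also have "((E0 \<inter> E1) \<union> (E0 \<inter> E2)) \<inter> (E1 \<inter> E2) = E0 \<inter> E1 \<inter> E2" by auto
    also have "(E0 \<inter> E1) \<inter> (E0 \<inter> E2) = E0 \<inter> E1 \<inter> E2" by auto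
    finally have "prob ((E0 \<inter> E1) \<union> (E0 \<inter> E2) \<union> (E1 \<inter> E2)) =
        prob (E0 \<inter> E1) + prob (E0 \<inter> E2) + prob (E1 \<inter> E2) - 2 * prob (E0 \<inter> E1 \<inter> E2)" by simp
    then show ?thesis
      unfolding E0_def E1_def E2_def using pair[OF _ _ _ S, of 0 1] pair[OF _ _ _ S, of 0 2] pair[OF _ _ _ S, of 1 2] triple[OF S]
      by (simp add: G_def)
  qed
  define UA where "UA = (EA 0 \<inter> EA 1) \<union> (EA 0 \<inter> EA 2) \<union> (EA 1 \<inter> EA 2)"
  define UB where "UB = (EB 0 \<inter> EB 1) \<union> (EB 0 \<inter> EB 2) \<union> (EB 1 \<inter> EB 2)"
  have UAm: "UA \<in> events" unfolding UA_def EA_def using ev cd(1) by auto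
  have UBm: "UB \<in> events" unfolding UB_def EB_def using ev cd(2) by auto
  have pUA: "prob UA = G (a 0) (a 1) (a 2)" unfolding UA_def EA_def a_def using twoof[OF cd(1)] by simp
  have pUB: "prob UB = G (b 0) (b 1) (b 2)" unfolding UB_def EB_def b_def using twoof[OF cd(2)] by simp
  have sub: "{\<omega> \<in> space M. p_23 (\<lambda>i. T i \<omega>) \<le> \<alpha>} \<subseteq> UA \<union> UB"
  proof
    fix \<omega> assume "\<omega> \<in> {\<omega> \<in> space M. p_23 (\<lambda>i. T i \<omega>) \<le> \<alpha>}"
    then have om: "\<omega> \<in> space M" and le: "p_23 (\<lambda>i. T i \<omega>) \<le> \<alpha>" by auto
    from le have "p_plus_23 (\<lambda>i. T i \<omega>) \<le> \<alpha> \<or> p_minus_23 (\<lambda>i. T i \<omega>) \<le> \<alpha>"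
      unfolding p_23_def by linarith
    then show "\<omega> \<in> UA \<union> UB"
    proof
      assume "p_plus_23 (\<lambda>i. T i \<omega>) \<le> \<alpha>"
      then have "sort [1 - Phi (T 0 \<omega>), 1 - Phi (T 1 \<omega>), 1 - Phi (T 2 \<omega>)] ! 1 \<le> c"
        unfolding p_plus_23_def order_stat_3 c_def by simp
      from med3[OF this] have "\<omega> \<in> UA"
        unfolding UA_def EA_def As_def using om by auto
      then show ?thesis by simp
    next
      assume "p_minus_23 (\<lambda>i. T i \<omega>) \<le> \<alpha>"
      then have "sort [Phi (T 0 \<omega>), Phi (T 1 \<omega>), Phi (T 2 \<omega>)] ! 1 \<le> c"
        unfolding p_minus_23_def order_stat_3 c_def by simp
      from med3[OF this] have "\<omega> \<in> UB"
        unfolding UB_def EB_def Bs_def using om by auto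
      then show ?thesis by simp
    qed
  qed
  have "measure M {\<omega> \<in> space M. p_23 (\<lambda>i. T i \<omega>) \<le> \<alpha>} \<le> prob (UA \<union> UB)"
    using sub UAm UBm by (intro finite_measure_mono) auto
  also have "\<dots> \<le> prob UA + prob UB" using UAm UBm by (rule measure_Un_le)
  also have "\<dots> = G (a 0) (a 1) (a 2) + G (b 0) (b 1) (b 2)" using pUA pUB by simp
  also have "\<dots> \<le> 2 * c"
  proof -
    obtain j m k where jmk: "j < 3" "m < 3" "k < (3::nat)" "j \<noteq> m" "j \<noteq> k" "m \<noteq> k"
      and tj: "0 \<le> \<theta> j" and tm: "\<theta> m \<le> 0" and tk: "\<theta> k = 0"
      using H_perm[OF assms(6)] by blast
    have "G (a j) (a m) (a k) + G (b j) (b m) (b k) \<le> 2 * c"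
    proof (rule alg)
      show "0 \<le> a j" "0 \<le> a m" "0 \<le> a k" "0 \<le> b j" "0 \<le> b m" "0 \<le> b k" "0 \<le> r j" "0 \<le> r m"
        unfolding a_def b_def r_def by auto
      show "a j + b j + r j = 1" "a m + b m + r m = 1" unfolding a_def b_def r_def using cd(4) by auto
      show "a k \<le> c" "b k \<le> c" unfolding a_def b_def using cd(7,8) tk by auto
      show "(1 - 2*c) * b j \<le> c * r j" unfolding b_def r_def using cd(6) tj by auto
      show "(1 - 2*c) * a m \<le> c * r m" unfolding a_def r_def using cd(5) tm by auto
      show "0 \<le> c" "c \<le> 1/2" using c0 c1 by auto
    qed
    then show ?thesis using G_perm[OF jmk, of a] G_perm[OF jmk, of b] by simp
  qed
  also have "\<dots> = \<alpha>" unfolding c_def by simp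
  finally show ?thesis .
qed

end
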